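(* Let $m\ge 2$. Let $X_1,\dots,X_m\in\mathbb{C}^n$ with $X_i=(x_{i,1},\dots,x_{i,n})$, and let $\alpha_1,\dots,\alpha_m\in\mathbb{Z}_{\ge0}^n$ with $\alpha_j=(\alpha_{j,1},\dots,\alpha_{j,n})$. Put $X_i^{\alpha_j}=x_{i,1}^{\alpha_{j,1}}x_{i,2}^{\alpha_{j,2}}\cdots x_{i,n}^{\alpha_{j,n}}$ and let $V_m=\det\big(X_i^{\alpha_j}\big)_{i,j=1}^m$ (row index $i$, column index $j$). Let $$M=\max_{i,j}|X_i^{\alpha_j}|,\qquad B=\max_{i,j,k}\Big\{|X_i^{\alpha_j}-X_i^{\alpha_k}|,\ |X_j^{\alpha_i}-X_k^{\alpha_i}|\Big\},$$ where all indices range over $1,\dots,m$. Then $|V_m|\le m!\,M^{m-1}B$.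
   Context: $V_m$ is called a generalized Vandermonde determinant. *)

theory Defs
  imports Complex_Main "Jordan_Normal_Form.Determinant"
begin

(* Points X_1..X_m in C^n are given as X :: nat => nat => complex with
   X i k = x_{i+1,k+1} (0-based, i < m, k < n);
   exponents alpha_1..alpha_m in Z_{>=0}^n as alpha :: nat => nat => nat. *)

definition monom :: "nat \<Rightarrow> (nat \<Rightarrow> complex) \<Rightarrow> (nat \<Rightarrow> nat) \<Rightarrow> complex" where
  "monom n x a = (\<Prod>k<n. x k ^ a k)"

definition gen_vandermonde_mat ::
  "nat \<Rightarrow> nat \<Rightarrow> (nat \<Rightarrow> nat \<Rightarrow> complex) \<Rightarrow> (nat \<Rightarrow> nat \<Rightarrow> nat) \<Rightarrow> complex mat" where
  "gen_vandermonde_mat m n X alpha = mat m m (\<lambda>(i, j). monom n (X i) (alpha j))"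

definition gen_vandermonde ::
  "nat \<Rightarrow> nat \<Rightarrow> (nat \<Rightarrow> nat \<Rightarrow> complex) \<Rightarrow> (nat \<Rightarrow> nat \<Rightarrow> nat) \<Rightarrow> complex" where
  "gen_vandermonde m n X alpha = det (gen_vandermonde_mat m n X alpha)"

definition bound_M ::
  "nat \<Rightarrow> nat \<Rightarrow> (nat \<Rightarrow> nat \<Rightarrow> complex) \<Rightarrow> (nat \<Rightarrow> nat \<Rightarrow> nat) \<Rightarrow> real" where
  "bound_M m n X alpha = Max {cmod (monom n (X i) (alpha j)) | i j. i < m \<and> j < m}"

definition bound_B ::
  "nat \<Rightarrow> nat \<Rightarrow> (nat \<Rightarrow> nat \<Rightarrow> complex) \<Rightarrow> (nat \<Rightarrow> nat \<Rightarrow> nat) \<Rightarrow> real" where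
  "bound_B m n X alpha = Max ({cmod (monom n (X i) (alpha j) - monom n (X i) (alpha k)) | i j k. i < m \<and> j < m \<and> k < m}
       \<union> {cmod (monom n (X j) (alpha i) - monom n (X k) (alpha i)) | i j k. i < m \<and> j < m \<and> k < m})"

end

theory Submission
  imports Defs "Jordan_Normal_Form.Column_Operations"
begin

theorem theorem2:
  fixes m n :: nat and X :: "nat \<Rightarrow> nat \<Rightarrow> complex" and alpha :: "nat \<Rightarrow> nat \<Rightarrow> nat"
  assumes "m \<ge> 2"
  shows "cmod (gen_vandermonde m n X alpha)
           \<le> fact m * bound_M m n X alpha ^ (m - 1) * bound_B m n X alpha"
proof -
  define a where "a = (\<lambda>i j. monom n (X i) (alpha j))"
  define M where "M = bound_M m n X alpha"
  define B where "B = bound_B m n X alpha"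
  define A where "A = gen_vandermonde_mat m n X alpha"
  define C where "C = addcol (-1) 0 1 A"
  have Ac: "A \<in> carrier_mat m m" unfolding A_def gen_vandermonde_mat_def by auto
  have dA: "dim_row A = m" "dim_col A = m" using Ac by auto
  have Cc: "C \<in> carrier_mat m m" unfolding C_def using dA by auto
  have detC: "det C = det A" unfolding C_def using Ac assms by (intro det_addcol) auto
  have Aij: "A $$ (i,j) = a i j" if "i < m" "j < m" for i j
    using that unfolding A_def a_def gen_vandermonde_mat_def by auto
  have fM: "finite {cmod (a i j) | i j. i < m \<and> j < m}"
  proof -
    have "{cmod (a i j) | i j. i < m \<and> j < m} = (\<lambda>(i,j). cmod (a i j)) ` ({..<m} \<times> {..<m})"
      by auto
    then show ?thesis by simp
  qed
  have Mge: "cmod (a i j) \<le> M" if "i < m" "j < m" for i j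
  proof -
    have e: "M = Max {cmod (a i j) | i j. i < m \<and> j < m}" unfolding M_def bound_M_def a_def by simp
    show ?thesis unfolding e by (rule Max_ge[OF fM]) (use that in blast)
  qed
  define S1 where "S1 = {cmod (a i j - a i k) | i j k. i < m \<and> j < m \<and> k < m}"
  define S2 where "S2 = {cmod (a j i - a k i) | i j k. i < m \<and> j < m \<and> k < m}"
  have fS1: "finite S1"
  proof -
    have "S1 = (\<lambda>(i,j,k). cmod (a i j - a i k)) ` ({..<m} \<times> {..<m} \<times> {..<m})"
      unfolding S1_def image_def by fastforce
    then show ?thesis by simp
  qed
  have fS2: "finite S2"
  proof -
    have "S2 = (\<lambda>(i,j,k). cmod (a j i - a k i)) ` ({..<m} \<times> {..<m} \<times> {..<m})"
      unfolding S2_def image_def by fastforce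
    then show ?thesis by simp
  qed
  have Bge: "cmod (a i 0 - a i 1) \<le> B" if "i < m" for i
  proof -
    have inS: "cmod (a i 0 - a i 1) \<in> S1" unfolding S1_def using that assms by force
    have e: "B = Max (S1 \<union> S2)" unfolding B_def bound_B_def S1_def S2_def a_def by simp
    then show ?thesis unfolding e
      using fS1 fS2 inS by (intro Max_ge) auto
  qed
  have M0: "0 \<le> M" using Mge[of 0 0] assms by (meson norm_ge_zero order_trans zero_less_iff_neq_zero not_numeral_le_zero le_less_trans less_le_trans pos2)
  have Cij: "cmod (C $$ (i,j)) \<le> (if j = 0 then B else M)" if "i < m" "j < m" for i j
  proof (cases "j = 0")
    case True
    have "C $$ (i,j) = a i 0 - a i 1" unfolding C_def using that True dA assms Aij by simp
    then show ?thesis using Bge[OF that(1)] True by simp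
  next
    case False
    have "C $$ (i,j) = a i j" unfolding C_def using that False dA Aij by simp
    then show ?thesis using Mge[OF that] False by simp
  qed
  have perm_bound: "(\<Prod>i = 0..<m. cmod (C $$ (i, p i))) \<le> B * M ^ (m - 1)"
    if p: "p permutes {0..<m}" for p
  proof -
    obtain i0 where i0: "i0 < m" "p i0 = 0"
      using p assms by (metis atLeastLessThan_iff le0 less_le_trans permutes_def pos2)
    have pin: "p i < m" if "i < m" for i using p that by (simp add: permutes_in_image)
    have pne: "p i \<noteq> 0" if "i < m" "i \<noteq> i0" for i
      using p that i0 by (metis permutes_inj inj_eq)
    have "(\<Prod>i = 0..<m. cmod (C $$ (i, p i))) =
          cmod (C $$ (i0, p i0)) * (\<Prod>i \<in> {0..<m} - {i0}. cmod (C $$ (i, p i)))"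
      using i0 by (subst prod.remove[of _ i0]) auto
    also have "\<dots> \<le> B * (\<Prod>i \<in> {0..<m} - {i0}. M)"
    proof (rule mult_mono)
      show "cmod (C $$ (i0, p i0)) \<le> B" using Cij[of i0 0] i0 by simp
      show "(\<Prod>i \<in> {0..<m} - {i0}. cmod (C $$ (i, p i))) \<le> (\<Prod>i \<in> {0..<m} - {i0}. M)"
        by (rule prod_mono) (use Cij pin pne in fastforce)
      show "0 \<le> B" using Bge[of i0] i0 norm_ge_zero order_trans by blast
      show "0 \<le> (\<Prod>i \<in> {0..<m} - {i0}. cmod (C $$ (i, p i)))" by (simp add: prod_nonneg)
    qed
    also have "(\<Prod>i \<in> {0..<m} - {i0}. M) = M ^ (m - 1)"
      using i0 by simp
    finally show ?thesis .
  qed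
  have "cmod (det C) \<le> (\<Sum>p \<in> {p. p permutes {0..<m}}. cmod (signof p * (\<Prod>i = 0..<m. C $$ (i, p i))))"
    unfolding det_def'[OF Cc] by (rule norm_sum)
  also have "\<dots> = (\<Sum>p \<in> {p. p permutes {0..<m}}. (\<Prod>i = 0..<m. cmod (C $$ (i, p i))))"
    by (intro sum.cong refl) (simp add: sign_def norm_mult prod_norm)
  also have "\<dots> \<le> (\<Sum>p \<in> {p. p permutes {0..<m}}. B * M ^ (m - 1))"
    by (intro sum_mono perm_bound) simp
  also have "\<dots> = fact m * M ^ (m - 1) * B"
    by (simp add: card_permutations)
  finally show ?thesis
    unfolding gen_vandermonde_def A_def[symmetric] detC[symmetric] M_def B_def .
qed

end
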